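(* Let $\sigma,\hat\sigma\in\mathfrak S_j$ with $\mathrm{ides}(\sigma)=\mathrm{ides}(\hat\sigma)$, and let $\tau,\hat\tau\in\mathfrak S_k$ with $\mathrm{ides}(\tau)=\mathrm{ides}(\hat\tau)$. Then \[ \sum_{\mu \in \sigma \vartriangle \tau}t^{\mathrm{ides}(\mu)} =\sum_{\mu \in \hat{\sigma} \triangledown \hat{\tau}}t^{\mathrm{ides}(\mu)}. \]
   Context: $\mathfrak S_n$ is the set of permutations of $[n]$ written as words ($\mathfrak S_0=\{\text{empty word}\}$). $\mathrm{ides}(\mu)=\mathrm{des}(\mu^{-1})$, the number of descents of the inverse. For a word $\sigma'$ of $j$ distinct integers, $\sigma'\sim\sigma$ means that replacing the letters of $\sigma'$ order-preservingly by $1,\dots,j$ gives $\sigma$. For $\sigma\in\mathfrak S_j,\tau\in\mathfrak S_k$: $\sigma\vartriangle\tau=\{\mu=\sigma'1\tau'\in\mathfrak S_{j+k+1}:\sigma'\sim\sigma,\ \tau'\sim\tau,\ j+k+1\text{ is a letter of }\tau'\}$ and $\sigma\triangledown\tau=\{\mu=\sigma'1\tau'\in\mathfrak S_{j+k+1}:\sigma'\sim\sigma,\ \tau'\sim\tau,\ 2\text{ is a letter of }\tau'\}$. *)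

theory Defs
  imports "HOL-Computational_Algebra.Polynomial"
begin

definition perms :: "nat \<Rightarrow> nat list set" where
  "perms n = {w. distinct w \<and> set w = {1..n}}"

definition des :: "nat list \<Rightarrow> nat" where
  "des w = card {i. Suc i < length w \<and> w ! i > w ! Suc i}"

text \<open>Inverse of a permutation word: the value at v is the (1-based) position of v.\<close>
definition perm_inv :: "nat list \<Rightarrow> nat list" where
  "perm_inv w = map (\<lambda>v. Suc (LEAST i. i < length w \<and> w ! i = v)) [1..<Suc (length w)]"

definition ides :: "nat list \<Rightarrow> nat" where
  "ides w = des (perm_inv w)"

definition red_eq :: "nat list \<Rightarrow> nat list \<Rightarrow> bool" where
  "red_eq s' s \<longleftrightarrow> distinct s' \<and> length s' = length s \<and>
     (\<forall>i<length s. \<forall>j<length s. s' ! i < s' ! j \<longleftrightarrow> s ! i < s ! j)"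

definition tri_up :: "nat list \<Rightarrow> nat list \<Rightarrow> nat list set" where
  "tri_up s t = {\<mu> \<in> perms (length s + length t + 1). \<exists>s' t'.
      \<mu> = s' @ [1] @ t' \<and> red_eq s' s \<and> red_eq t' t \<and> length s + length t + 1 \<in> set t'}"

definition tri_down :: "nat list \<Rightarrow> nat list \<Rightarrow> nat list set" where
  "tri_down s t = {\<mu> \<in> perms (length s + length t + 1). \<exists>s' t'.
      \<mu> = s' @ [1] @ t' \<and> red_eq s' s \<and> red_eq t' t \<and> 2 \<in> set t'}"

end

theory Submission
  imports Defs
begin


fun adjR :: "'a \<Rightarrow> 'a list \<Rightarrow> nat set" where
  "adjR c (x # y # zs) = (if x = c \<and> y = c then {0} else {}) \<union>
     (if x = c then Suc ` adjR c (y # zs) else adjR c (y # zs))"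
| "adjR c _ = {}"

definition cnt :: "'a \<Rightarrow> 'a list \<Rightarrow> nat" where
  "cnt c p = length (filter (\<lambda>x. x = c) p)"

lemma cnt_simps[simp]: "cnt c [] = 0" "cnt c (x # xs) = (if x = c then Suc (cnt c xs) else cnt c xs)"
  "cnt c (xs @ ys) = cnt c xs + cnt c ys"
  by (auto simp: cnt_def)

lemma cnt_last: "xs \<noteq> [] \<Longrightarrow> last xs = c \<Longrightarrow> cnt c xs \<ge> 1"
  by (induction xs) auto

lemma adjR_Cons: "adjR c (x # p) = (if x = c \<and> p \<noteq> [] \<and> hd p = c then {0} else {}) \<union>
    (if x = c then Suc ` adjR c p else adjR c p)"
  by (cases p) auto

lemma adjR_Nil[simp]: "adjR c [] = {}" and adjR_single[simp]: "adjR c [x] = {}"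
  by auto

declare adjR.simps(1)[simp del]

lemma adjR_bound': "i \<in> adjR c p \<Longrightarrow> Suc i < cnt c p"
proof (induction p arbitrary: i)
  case Nil then show ?case by simp
next
  case (Cons x p)
  show ?case
  proof (cases "x = c")
    case True
    have "p \<noteq> []" using Cons.prems by (cases p) auto
    show ?thesis
    proof (cases i)
      case 0
      have "cnt c p \<ge> 1"
      proof (cases "hd p = c")
        case True
        then show ?thesis using \<open>p \<noteq> []\<close> by (cases p) auto
      next
        case False
        then have "i \<in> Suc ` adjR c p" using Cons.prems \<open>x = c\<close> by (auto simp: adjR_Cons)
        then show ?thesis using 0 by auto
      qed
      then show ?thesis using 0 True by simp
    next
      case (Suc i')
      then have "i' \<in> adjR c p" using Cons.prems True by (auto simp: adjR_Cons split: if_splits)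
      then show ?thesis using Cons.IH Suc True by simp
    qed
  next
    case False
    then show ?thesis using Cons by (auto simp: adjR_Cons split: if_splits)
  qed
qed

lemma adjR_bound: "adjR c p \<subseteq> {i. Suc i < cnt c p}"
  using adjR_bound' by (auto simp: subset_iff)

lemma finite_adjR[simp]: "finite (adjR c p)"
  by (rule finite_subset[of _ "{..<cnt c p}"]) (auto dest: adjR_bound')

lemma adjR_append: "adjR c (xs @ ys) = adjR c xs \<union> (\<lambda>i. i + cnt c xs) ` adjR c ys \<union>
   (if xs \<noteq> [] \<and> ys \<noteq> [] \<and> last xs = c \<and> hd ys = c then {cnt c xs - 1} else {})"
proof (induction xs)
  case Nil then show ?case by simp
next
  case (Cons x xs)
  show ?case
  proof (cases "xs = []")
    case True
    then show ?thesis by (cases ys) (auto simp: adjR_Cons)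
  next
    case False
    note IH = Cons.IH
    show ?thesis
    proof (cases "x = c")
      case True
      have e: "adjR c (x # xs @ ys) = (if hd xs = c then {0} else {}) \<union> Suc ` adjR c (xs @ ys)"
        using True False by (simp add: adjR_Cons)
      have e2: "adjR c (x # xs) = (if hd xs = c then {0} else {}) \<union> Suc ` adjR c xs"
        using True False by (simp add: adjR_Cons)
      have cc: "last xs = c \<Longrightarrow> Suc (cnt c xs - 1) = cnt c xs"
        using cnt_last[OF False] by simp
      have e3: "(x # xs) @ ys = x # (xs @ ys)" by simp
      have hd: "hd (xs @ ys) = hd xs" using False by simp
      have l: "last (x # xs) = last xs" using False by simp
      show ?thesis unfolding e3 e e2 IH l using True False cc
        by (auto simp: image_Un image_image)
    next
      case False': False
      have e: "adjR c (x # xs @ ys) = adjR c (xs @ ys)"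
        using False' by (simp add: adjR_Cons)
      have e2: "adjR c (x # xs) = adjR c xs"
        using False' by (simp add: adjR_Cons)
      have e3: "(x # xs) @ ys = x # (xs @ ys)" by simp
      have l: "last (x # xs) = last xs" using False by simp
      show ?thesis unfolding e3 e e2 IH l using False' False by auto
    qed
  qed
qed

lemma cnt_rev[simp]: "cnt c (rev p) = cnt c p"
  by (induction p) auto

lemma adjR_rev: "adjR c (rev p) = (\<lambda>i. cnt c p - 2 - i) ` adjR c p"
proof (induction p)
  case Nil then show ?case by simp
next
  case (Cons x p)
  have e: "adjR c (rev (x # p)) = adjR c (rev p) \<union>
     (if p \<noteq> [] \<and> hd p = c \<and> x = c then {cnt c p - 1} else {})"
    by (simp add: adjR_append last_rev)
  show ?case
  proof (cases "x = c")
    case True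
    have b: "\<And>i. i \<in> adjR c p \<Longrightarrow> Suc (cnt c p) - 2 - Suc i = cnt c p - 2 - i"
      using adjR_bound' by fastforce
    have "(\<lambda>i. cnt c (x # p) - 2 - i) ` adjR c (x # p) =
       (if p \<noteq> [] \<and> hd p = c then {cnt c p - 1} else {}) \<union> (\<lambda>i. cnt c p - 2 - i) ` adjR c p"
      using True b by (auto simp: adjR_Cons image_Un image_image)
    then show ?thesis using e Cons.IH True by auto
  next
    case False
    then show ?thesis using e Cons.IH by (simp add: adjR_Cons)
  qed
qed

fun ftR :: "bool list \<Rightarrow> nat" where
  "ftR (x # y # zs) = (if \<not> x \<and> y then 1 else 0) + ftR (y # zs)"
| "ftR _ = 0"

lemma card_0_Suc: "finite A \<Longrightarrow> card ((if P then {0} else {}) \<union> Suc ` A) = (if P then 1 else 0) + card A"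
  by (auto simp: card_image)

lemma runs_lemma: "cnt True p = (if p \<noteq> [] \<and> hd p then 1 else 0) + ftR p + card (adjR True p)"
proof (induction p)
  case Nil then show ?case by simp
next
  case (Cons x p)
  show ?case
  proof (cases p)
    case Nil then show ?thesis by simp
  next
    case (Cons y zs)
    show ?thesis
    proof (cases x)
      case True
      have "adjR True (x # p) = (if hd p then {0} else {}) \<union> Suc ` adjR True p"
        using True Cons by (simp add: adjR_Cons)
      then have "card (adjR True (x # p)) = (if hd p then 1 else 0) + card (adjR True p)"
        by (simp add: card_0_Suc)
      then show ?thesis using True Cons Cons.IH by simp
    next
      case False
      have "adjR True (x # p) = adjR True p"
        using False by (simp add: adjR_Cons)
      then show ?thesis using False Cons \<open>cnt True p = _\<close> by simp
    qed
  qed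
qed

definition desset :: "nat list \<Rightarrow> nat set" where
  "desset w = {i. Suc i < length w \<and> w ! i > w ! Suc i}"

lemma des_desset: "des w = card (desset w)"
  by (simp add: des_def desset_def)

lemma finite_desset[simp]: "finite (desset w)"
  by (rule finite_subset[of _ "{..<length w}"]) (auto simp: desset_def)

lemma desset_Cons: "desset (x # L) = (if L \<noteq> [] \<and> hd L < x then {0} else {}) \<union> Suc ` desset L"
proof (rule set_eqI)
  fix i show "i \<in> desset (x # L) \<longleftrightarrow> i \<in> (if L \<noteq> [] \<and> hd L < x then {0} else {}) \<union> Suc ` desset L"
  proof (cases i)
    case 0 then show ?thesis by (cases L) (auto simp: desset_def)
  next
    case (Suc i') then show ?thesis by (auto simp: desset_def)
  qed
qed

lemma desset_map_plus: "desset (map ((+) c) w) = desset w"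
  by (auto simp: desset_def)

fun Mg :: "bool list \<Rightarrow> nat list \<Rightarrow> nat list \<Rightarrow> nat list" where
  "Mg [] u w = []"
| "Mg (True # p) u w = hd u # Mg p (tl u) w"
| "Mg (False # p) u w = hd w # Mg p u (tl w)"

lemma length_Mg[simp]: "length (Mg p u w) = length p"
  by (induction p u w rule: Mg.induct) auto

lemma Mg_Nil_iff[simp]: "Mg p u w = [] \<longleftrightarrow> p = []"
  by (metis length_Mg length_0_conv)

lemma nth_Mg: "length u = cnt True p \<Longrightarrow> length w = cnt False p \<Longrightarrow> i < length p \<Longrightarrow>
  Mg p u w ! i = (if p ! i then u ! cnt True (take i p) else w ! cnt False (take i p))"
proof (induction p u w arbitrary: i rule: Mg.induct)
  case (1 u w) then show ?case by simp
next
  case (2 p u w)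
  then show ?case by (cases u; cases i) auto
next
  case (3 p u w)
  then show ?case by (cases w; cases i) auto
qed

lemma hd_Mg: "length u = cnt True p \<Longrightarrow> length w = cnt False p \<Longrightarrow> p \<noteq> [] \<Longrightarrow>
  hd (Mg p u w) = (if hd p then hd u else hd w)"
  by (cases p; cases "hd p") auto

lemma set_Mg: "length u = cnt True p \<Longrightarrow> length w = cnt False p \<Longrightarrow> set (Mg p u w) \<subseteq> set u \<union> set w"
proof (induction p u w rule: Mg.induct)
  case (1 u w) then show ?case by simp
next
  case (2 p u w)
  then show ?case by (cases u) auto
next
  case (3 p u w)
  then show ?case by (cases w) auto
qed

lemma des_Mg: "length u = cnt True p \<Longrightarrow> length w = cnt False p \<Longrightarrow> \<forall>x\<in>set u. \<forall>y\<in>set w. x < y \<Longrightarrow>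
  card (desset (Mg p u w)) = ftR p + card (desset u \<inter> adjR True p) + card (desset w \<inter> adjR False p)"
proof (induction p arbitrary: u w)
  case Nil then show ?case by (simp add: desset_def)
next
  case (Cons b p)
  show ?case
  proof (cases b)
    case True
    obtain a u' where u: "u = a # u'" using Cons.prems True by (cases u) auto
    have lu: "length u' = cnt True p" "length w = cnt False p" using Cons.prems u True by auto
    have ord: "\<forall>x\<in>set u'. \<forall>y\<in>set w. x < y" using Cons.prems u by auto
    have mg: "Mg (b # p) u w = a # Mg p u' w" using u True by simp
    have ds1: "desset (Mg (b # p) u w) = (if p \<noteq> [] \<and> hd p \<and> u' \<noteq> [] \<and> hd u' < a then {0} else {})
        \<union> Suc ` desset (Mg p u' w)"
    proof -
      have "(Mg p u' w \<noteq> [] \<and> hd (Mg p u' w) < a) = (p \<noteq> [] \<and> hd p \<and> u' \<noteq> [] \<and> hd u' < a)"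
      proof (cases "p = []")
        case False
        show ?thesis
        proof (cases "hd p")
          case True
          then have "cnt True p \<noteq> 0" using False by (cases p) auto
          then show ?thesis using False True hd_Mg[OF lu] lu by auto
        next
          case F: False
          then have "cnt False p \<noteq> 0" using False by (cases p) auto
          then have "w \<noteq> []" using lu by auto
          then have "a < hd w" using Cons.prems u by auto
          then show ?thesis using False F hd_Mg[OF lu] lu by auto
        qed
      qed simp
      then show ?thesis unfolding mg desset_Cons by simp
    qed
    have ds2: "desset u \<inter> adjR True (b # p) = (if p \<noteq> [] \<and> hd p \<and> u' \<noteq> [] \<and> hd u' < a then {0} else {})
        \<union> Suc ` (desset u' \<inter> adjR True p)"
      unfolding u desset_Cons adjR_Cons using True by auto
    have ds3: "adjR False (b # p) = adjR False p" using True by (simp add: adjR_Cons)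
    have ft: "ftR (b # p) = ftR p" using True by (cases p) auto
    show ?thesis unfolding ds1 ds2 ds3 ft
      by (simp add: card_0_Suc Cons.IH[OF lu ord])
  next
    case False
    obtain a w' where w: "w = a # w'" using Cons.prems False by (cases w) auto
    have lu: "length u = cnt True p" "length w' = cnt False p" using Cons.prems w False by auto
    have ord: "\<forall>x\<in>set u. \<forall>y\<in>set w'. x < y" using Cons.prems w by auto
    have mg: "Mg (b # p) u w = a # Mg p u w'" using w False by simp
    have ds1: "desset (Mg (b # p) u w) = (if p \<noteq> [] \<and> (hd p \<or> w' \<noteq> [] \<and> hd w' < a) then {0} else {})
        \<union> Suc ` desset (Mg p u w')"
    proof -
      have "(Mg p u w' \<noteq> [] \<and> hd (Mg p u w') < a) = (p \<noteq> [] \<and> (hd p \<or> w' \<noteq> [] \<and> hd w' < a))"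
      proof (cases "p = []")
        case False
        show ?thesis
        proof (cases "hd p")
          case True
          then have "cnt True p \<noteq> 0" using False by (cases p) auto
          then have "u \<noteq> []" using lu by auto
          then have "hd u < a" using Cons.prems w by auto
          then show ?thesis using False True hd_Mg[OF lu] lu by auto
        next
          case F: False
          then have "cnt False p \<noteq> 0" using False by (cases p) auto
          then show ?thesis using False F hd_Mg[OF lu] lu by auto
        qed
      qed simp
      then show ?thesis unfolding mg desset_Cons by simp
    qed
    have ds2: "desset w \<inter> adjR False (b # p) = (if p \<noteq> [] \<and> \<not> hd p \<and> w' \<noteq> [] \<and> hd w' < a then {0} else {})
        \<union> Suc ` (desset w' \<inter> adjR False p)"
      unfolding w desset_Cons adjR_Cons using False by auto
    have ds3: "adjR True (b # p) = adjR True p" using False by (simp add: adjR_Cons)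
    have ft: "ftR (b # p) = (if p \<noteq> [] \<and> hd p then 1 else 0) + ftR p" using False by (cases p) auto
    have "card (desset (Mg (b # p) u w)) = (if p \<noteq> [] \<and> hd p then 1 else 0) +
       (if p \<noteq> [] \<and> \<not> hd p \<and> w' \<noteq> [] \<and> hd w' < a then 1 else 0) + card (desset (Mg p u w'))"
      unfolding ds1 by (simp add: card_0_Suc)
    then show ?thesis unfolding ds2 ds3 ft
      by (simp add: card_0_Suc Cons.IH[OF lu ord])
  qed
qed




fun patg :: "'a \<Rightarrow> 'a \<Rightarrow> nat list \<Rightarrow> 'a list" where
  "patg c d [] = []"
| "patg c d [g] = replicate g d"
| "patg c d (g # h # gs) = replicate g d @ c # patg c d (h # gs)"

fun gaps :: "'a \<Rightarrow> 'a list \<Rightarrow> nat list" where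
  "gaps c [] = [0]"
| "gaps c (x # p) = (if x = c then 0 # gaps c p else (case gaps c p of g # gs \<Rightarrow> Suc g # gs | [] \<Rightarrow> []))"

lemma gaps_ne[simp]: "gaps c p \<noteq> []"
  by (induction p) (auto split: list.split)

lemma gaps_props: "set p \<subseteq> {c, d} \<Longrightarrow> c \<noteq> d \<Longrightarrow>
  length (gaps c p) = Suc (cnt c p) \<and> sum_list (gaps c p) = cnt d p"
proof (induction p)
  case Nil then show ?case by simp
next
  case (Cons x p)
  then show ?case using gaps_ne[of c p] by (auto split: list.split)
qed

lemma patg_Suc: "patg c d (Suc g # gs) = d # patg c d (g # gs)"
  by (cases gs) auto

lemma patg_gaps: "set p \<subseteq> {c, d} \<Longrightarrow> c \<noteq> d \<Longrightarrow> patg c d (gaps c p) = p"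
proof (induction p)
  case Nil then show ?case by simp
next
  case (Cons x p)
  obtain g gs where gg: "gaps c p = g # gs" using gaps_ne[of c p] by (cases "gaps c p") auto
  show ?case
  proof (cases "x = c")
    case True then show ?thesis using Cons gg by simp
  next
    case False
    then have "x = d" using Cons.prems by auto
    then show ?thesis using Cons gg False by (simp add: patg_Suc)
  qed
qed

lemma gaps_rep: "c \<noteq> d \<Longrightarrow> gaps c (replicate n d @ xs) = (case gaps c xs of g # gs \<Rightarrow> (g + n) # gs | [] \<Rightarrow> [])"
  by (induction n) (auto split: list.split)

lemma gaps_patg: "g \<noteq> [] \<Longrightarrow> c \<noteq> d \<Longrightarrow> gaps c (patg c d g) = g"
proof (induction c d g rule: patg.induct)
  case (1 c d) then show ?case by simp
next
  case (2 c d g)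
  then show ?case using gaps_rep[of c d g "[]"] by simp
next
  case (3 c d g h gs)
  then show ?case using gaps_rep[of c d g "c # patg c d (h # gs)"] by simp
qed

lemma cnt_rep[simp]: "cnt c (replicate n d) = (if c = d then n else 0)"
  by (induction n) auto

lemma patg_props: "g \<noteq> [] \<Longrightarrow> c \<noteq> d \<Longrightarrow> set (patg c d g) \<subseteq> {c, d} \<and> cnt c (patg c d g) = length g - 1
   \<and> cnt d (patg c d g) = sum_list g"
  by (induction c d g rule: patg.induct) auto

lemma adjR_rep: "c \<noteq> d \<Longrightarrow> adjR c (replicate n d) = {}"
  by (induction n) (auto simp: adjR_Cons)

lemma adjR_rep_Cons: "c \<noteq> d \<Longrightarrow> adjR c (replicate n d @ c # L) = adjR c (c # L)"
  by (induction n) (auto simp: adjR_Cons)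

lemma adjR_other_Cons: "c \<noteq> d \<Longrightarrow> adjR d (xs @ c # L) = adjR d xs \<union> (\<lambda>i. i + cnt d xs) ` adjR d L"
  by (cases L) (auto simp: adjR_append adjR_Cons)

lemma hd_patg: "hd (patg c d (h # gs)) = (if h = 0 then c else d)" if "gs \<noteq> []"
  using that by (cases h; cases gs) auto

lemma adjR_patg: "c \<noteq> d \<Longrightarrow> adjR c (patg c d g) = {i. Suc i < length g - 1 \<and> g ! Suc i = 0}"
proof (induction c d g rule: patg.induct)
  case (1 c d) then show ?case by simp
next
  case (2 c d g)
  then show ?case by (simp add: adjR_rep)
next
  case (3 c d g h gs)
  have e: "adjR c (patg c d (g # h # gs)) = adjR c (c # patg c d (h # gs))"
    using adjR_rep_Cons[OF 3(2)] by simp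
  have e2: "adjR c (c # patg c d (h # gs)) = (if gs \<noteq> [] \<and> h = 0 then {0} else {}) \<union> Suc ` adjR c (patg c d (h # gs))"
  proof (cases "gs = []")
    case True then show ?thesis using 3(2) by (cases h) (simp_all add: adjR_Cons adjR_rep)
  next
    case False
    then have "patg c d (h # gs) \<noteq> []" by (cases gs) auto
    then show ?thesis using False 3(2) by (simp add: adjR_Cons hd_patg)
  qed
  show ?case unfolding e e2 3(1)[OF 3(2)]
  proof (rule set_eqI)
    fix i show "i \<in> (if gs \<noteq> [] \<and> h = 0 then {0} else {}) \<union> Suc ` {i. Suc i < length (h # gs) - 1 \<and> (h # gs) ! Suc i = 0}
       \<longleftrightarrow> i \<in> {i. Suc i < length (g # h # gs) - 1 \<and> (g # h # gs) ! Suc i = 0}"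
      by (cases i) (auto simp: image_iff)
  qed
qed



definition trn :: "nat \<Rightarrow> nat \<Rightarrow> nat" where
  "trn a x = (if x = a then Suc a else if x = Suc a then a else x)"

lemma trn_trn[simp]: "trn a (trn a x) = x"
  by (auto simp: trn_def)

lemma mem_trn_image: "x \<in> trn a ` S \<longleftrightarrow> trn a x \<in> S"
proof
  assume "x \<in> trn a ` S"
  then obtain y where "y \<in> S" "x = trn a y" by auto
  then show "trn a x \<in> S" by simp
next
  assume "trn a x \<in> S"
  then have "trn a (trn a x) \<in> trn a ` S" by (rule imageI)
  then show "x \<in> trn a ` S" by simp
qed

lemma inj_trn: "inj (trn a)"
proof (rule injI)
  fix x y assume "trn a x = trn a y"
  then have "trn a (trn a x) = trn a (trn a y)" by simp
  then show "x = y" by simp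
qed

definition sw :: "nat \<Rightarrow> nat list \<Rightarrow> nat list" where
  "sw r g = (if (g ! r = 0) \<noteq> (g ! Suc r = 0) then g[r := g ! Suc r, Suc r := g ! r] else g)"

lemma sw_length[simp]: "length (sw r g) = length g"
  by (simp add: sw_def)

lemma sw_sw: "Suc r < length g \<Longrightarrow> sw r (sw r g) = g"
proof -
  assume a: "Suc r < length g"
  show ?thesis
  proof (cases "(g ! r = 0) \<noteq> (g ! Suc r = 0)")
    case True
    let ?g = "g[r := g ! Suc r, Suc r := g ! r]"
    have n1: "?g ! r = g ! Suc r" "?g ! Suc r = g ! r" using a by (auto simp: nth_list_update)
    have "sw r g = ?g" using True by (simp add: sw_def)
    moreover have "sw r ?g = ?g[r := g ! r, Suc r := g ! Suc r]" using True n1 by (simp add: sw_def)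
    moreover have "?g[r := g ! r, Suc r := g ! Suc r] = g"
    proof (rule nth_equalityI)
      fix i assume "i < length (?g[r := g ! r, Suc r := g ! Suc r])"
      then show "?g[r := g ! r, Suc r := g ! Suc r] ! i = g ! i"
        by (cases "i = r"; cases "i = Suc r") (simp_all add: nth_list_update)
    qed simp
    ultimately show ?thesis by simp
  next
    case False then show ?thesis by (simp add: sw_def)
  qed
qed

lemma sw_sum: "Suc r < length g \<Longrightarrow> sum_list (sw r g) = sum_list g"
proof -
  assume a: "Suc r < length g"
  have "mset (g[r := g ! Suc r, Suc r := g ! r]) = mset g"
    using mset_swap[of "Suc r" g r] a by simp
  then have "sum_list (g[r := g ! Suc r, Suc r := g ! r]) = sum_list g"
    by (metis sum_mset_sum_list)
  then show ?thesis unfolding sw_def by simp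
qed

lemma sw_nth_zero: "Suc r < length g \<Longrightarrow> x < length g \<Longrightarrow> (sw r g ! x = 0) = (g ! trn r x = 0)"
  unfolding sw_def trn_def
  by (cases "x = r"; cases "x = Suc r"; cases "(g ! r = 0) \<noteq> (g ! Suc r = 0)") (simp_all add: nth_list_update)

lemma sw_nth_other: "Suc r < length g \<Longrightarrow> x \<noteq> r \<Longrightarrow> x \<noteq> Suc r \<Longrightarrow> sw r g ! x = g ! x"
  unfolding sw_def by (simp add: nth_list_update)

lemma trn_Suc: "1 \<le> r \<Longrightarrow> trn r (Suc i) = Suc (trn (r - 1) i)"
  by (auto simp: trn_def)

lemma adjR_patg_sw: assumes "c \<noteq> d" "1 \<le> r" "Suc r < length g - 1"
  shows "adjR c (patg c d (sw r g)) = trn (r - 1) ` adjR c (patg c d g)"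
  unfolding adjR_patg[OF assms(1)] sw_length
proof (rule set_eqI)
  fix i
  have b: "Suc (trn (r - 1) i) < length g - 1 \<longleftrightarrow> Suc i < length g - 1"
    using assms by (auto simp: trn_def)
  show "i \<in> {i. Suc i < length g - 1 \<and> sw r g ! Suc i = 0} \<longleftrightarrow>
        i \<in> trn (r - 1) ` {i. Suc i < length g - 1 \<and> g ! Suc i = 0}"
    unfolding mem_trn_image using b assms sw_nth_zero[of r g "Suc i"] trn_Suc[OF assms(2)]
    by auto
qed

lemma patg_split: "xs \<noteq> [] \<Longrightarrow> ys \<noteq> [] \<Longrightarrow> patg c d (xs @ ys) = patg c d xs @ c # patg c d ys"
proof (induction xs)
  case Nil then show ?case by simp
next
  case (Cons x xs)
  show ?case
  proof (cases xs)
    case Nil then show ?thesis using Cons.prems by (cases ys) auto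
  next
    case (Cons x' xs')
    then show ?thesis using Cons.IH Cons.prems by auto
  qed
qed

lemma last_app_Cons: "last (xs @ c # ys) = (if ys = [] then c else last ys)"
  by (simp add: last_append)

lemma patg_sw_other: assumes "c \<noteq> d" "1 \<le> r" "Suc r < length g - 1"
  shows "adjR d (patg c d (sw r g)) = adjR d (patg c d g) \<and>
    patg c d (sw r g) \<noteq> [] \<and> patg c d g \<noteq> [] \<and> hd (patg c d (sw r g)) = hd (patg c d g) \<and>
    last (patg c d (sw r g)) = last (patg c d g)"
proof -
  define X where "X = take r g"
  define Z where "Z = drop (Suc (Suc r)) g"
  define a where "a = g ! r"
  define b where "b = g ! Suc r"
  have lX: "length X = r" using assms by (simp add: X_def)
  have X: "X \<noteq> []" using assms lX by auto
  have Z: "Z \<noteq> []" using assms by (simp add: Z_def)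
  have g: "g = X @ a # b # Z"
    unfolding X_def Z_def a_def b_def using assms
    by (metis Cons_nth_drop_Suc Suc_lessD append_take_drop_id diff_le_self order_less_le_trans)
  have pg: "\<And>a b. patg c d (X @ a # b # Z) = patg c d X @ c # replicate a d @ c # replicate b d @ c # patg c d Z"
  proof -
    fix a b
    have "patg c d (b # Z) = replicate b d @ c # patg c d Z" using Z by (cases Z) auto
    then show "patg c d (X @ a # b # Z) = patg c d X @ c # replicate a d @ c # replicate b d @ c # patg c d Z"
      using patg_split[OF X, of "a # b # Z" c d] by simp
  qed
  have pgg: "patg c d g = patg c d X @ c # replicate a d @ c # replicate b d @ c # patg c d Z"
    by (subst g) (rule pg)
  show ?thesis
  proof (cases "(g ! r = 0) \<noteq> (g ! Suc r = 0)")
    case True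
    have u: "g[r := b, Suc r := a] = X @ b # a # Z"
      by (subst g) (simp add: list_update_append lX)
    have sg: "sw r g = X @ b # a # Z"
      using True u unfolding sw_def a_def[symmetric] b_def[symmetric] by simp
    have ab: "a = 0 \<or> b = 0" using True a_def b_def by auto
    show ?thesis unfolding sg pgg pg using ab assms(1)
      by (auto simp: adjR_other_Cons image_Un image_image last_app_Cons hd_append)
  next
    case False
    have "patg c d g \<noteq> []" unfolding pgg by simp
    then show ?thesis unfolding sw_def using False by simp
  qed
qed




lemma card_trn[simp]: "card (trn i ` X) = card X"
  by (meson card_image inj_on_subset inj_trn subset_UNIV)

lemma swap_step:
  assumes cd: "c \<noteq> d" and r: "1 \<le> r" "Suc r < m"
    and p: "set p \<subseteq> {c, d}" "cnt c p = m" "cnt d p = k" "p \<noteq> []" "hd p = e"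
  defines "q \<equiv> patg c d (sw r (gaps c p))"
  shows "set q \<subseteq> {c, d} \<and> cnt c q = m \<and> cnt d q = k \<and> q \<noteq> [] \<and> hd q = e \<and>
    patg c d (sw r (gaps c q)) = p \<and> adjR c q = trn (r - 1) ` adjR c p \<and> adjR d q = adjR d p"
proof -
  define g where "g = gaps c p"
  have lg: "length g = Suc m" "sum_list g = k" using gaps_props[OF p(1) cd] p by (auto simp: g_def)
  have pg: "patg c d g = p" using patg_gaps[OF p(1) cd] by (simp add: g_def)
  have g'ne: "sw r g \<noteq> []" using lg by (metis length_0_conv nat.distinct(1) sw_length)
  have r': "Suc r < length g - 1" using lg r by simp
  have props: "set q \<subseteq> {c, d} \<and> cnt c q = m \<and> cnt d q = k"
    using patg_props[OF g'ne cd] lg sw_sum[of r g] r unfolding q_def g_def[symmetric] by simp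
  have oth: "adjR d q = adjR d p \<and> q \<noteq> [] \<and> hd q = e"
    using patg_sw_other[OF cd r(1) r'] pg p unfolding q_def g_def[symmetric] by simp
  have inv: "patg c d (sw r (gaps c q)) = p"
    unfolding q_def g_def[symmetric] gaps_patg[OF g'ne cd] sw_sw[of r g] using lg r
    by (simp add: sw_sw pg)
  have adj: "adjR c q = trn (r - 1) ` adjR c p"
    using adjR_patg_sw[OF cd r(1) r'] pg unfolding q_def g_def[symmetric] by simp
  show ?thesis using props oth inv adj by simp
qed

lemma swap_sum:
  fixes h :: "nat set \<Rightarrow> nat set \<Rightarrow> 'b::comm_monoid_add"
  assumes cd: "c \<noteq> d" and r: "1 \<le> r" "Suc r < m"
  shows "(\<Sum>p\<in>{p. set p \<subseteq> {c, d} \<and> cnt c p = m \<and> cnt d p = k \<and> p \<noteq> [] \<and> hd p = e}.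
            h (trn (r - 1) ` adjR c p) (adjR d p)) =
         (\<Sum>p\<in>{p. set p \<subseteq> {c, d} \<and> cnt c p = m \<and> cnt d p = k \<and> p \<noteq> [] \<and> hd p = e}.
            h (adjR c p) (adjR d p))"
  apply (rule sum.reindex_bij_witness[where i = "\<lambda>p. patg c d (sw r (gaps c p))"
        and j = "\<lambda>p. patg c d (sw r (gaps c p))"])
  using swap_step[OF cd r] by auto

lemma down_closed:
  fixes D :: "nat set"
  assumes "finite D" "\<forall>x\<in>D. 0 < x \<longrightarrow> x - 1 \<in> D"
  shows "D = {..<card D}"
proof (cases "D = {}")
  case True then show ?thesis by simp
next
  case False
  have dc: "\<forall>y. y \<le> x \<longrightarrow> y \<in> D" if "x \<in> D" for x
    using that
  proof (induction x)
    case 0 then show ?case by simp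
  next
    case (Suc x)
    then have "x \<in> D" using assms(2) by force
    then show ?case using Suc by (auto simp: le_Suc_eq)
  qed
  define M where "M = Max D"
  have "M \<in> D" using False assms(1) by (simp add: M_def)
  have "D = {..M}"
    using dc[OF \<open>M \<in> D\<close>] assms(1) by (auto simp: M_def)
  then show ?thesis by auto
qed

lemma card_invariance:
  fixes F :: "nat set \<Rightarrow> 'b"
  assumes inv: "\<And>D i. D \<subseteq> {x. Suc x < j} \<Longrightarrow> Suc (Suc i) < j \<Longrightarrow> F (trn i ` D) = F D"
    and D: "D \<subseteq> {x. Suc x < j}" and D': "D' \<subseteq> {x. Suc x < j}" and c: "card D = card D'"
  shows "F D = F D'"
proof -
  have fin: "finite D" if "D \<subseteq> {x. Suc x < j}" for D :: "nat set"
    using that by (rule finite_subset) (auto intro: finite_subset[of _ "{..<j}"])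
  have main: "F D = F {..<card D}" if "D \<subseteq> {x. Suc x < j}" for D
    using that
  proof (induction "sum id D" arbitrary: D rule: less_induct)
    case less
    show ?case
    proof (cases "\<forall>x\<in>D. 0 < x \<longrightarrow> x - 1 \<in> D")
      case True
      then have "D = {..<card D}" using down_closed fin less.prems by blast
      then show ?thesis by simp
    next
      case False
      then obtain x where x: "x \<in> D" "0 < x" "x - 1 \<notin> D" by auto
      define i where "i = x - 1"
      have xi: "x = Suc i" using x by (simp add: i_def)
      have a1: "i \<notin> D" using x(3) unfolding i_def .
      have a2: "Suc i \<in> D" using x(1) unfolding xi .
      have finD: "finite D" using fin less.prems by blast
      have ij: "Suc (Suc i) < j" using less.prems a2 by auto
      have img: "trn i ` D = insert i (D - {Suc i})"
      proof (rule set_eqI)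
        fix y show "y \<in> trn i ` D \<longleftrightarrow> y \<in> insert i (D - {Suc i})"
        proof -
          note a = a1 a2
          show ?thesis unfolding mem_trn_image
            by (cases "y = i"; cases "y = Suc i") (use a in \<open>simp_all add: trn_def\<close>)
        qed
      qed
      have sub: "trn i ` D \<subseteq> {x. Suc x < j}" unfolding img using less.prems ij by auto
      have cd: "card (trn i ` D) = card D" by simp
      have "Suc i \<le> sum id D" using member_le_sum[of "Suc i" D id] a2 finD by simp
      then have "sum id (trn i ` D) < sum id D"
        unfolding img using a1 a2 finD by (simp add: sum_diff1_nat)
      then have "F (trn i ` D) = F {..<card (trn i ` D)}" using less.hyps sub by blast
      then show ?thesis using inv[OF less.prems ij] cd by simp
    qed
  qed
  show ?thesis using main[OF D] main[OF D'] c by simp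
qed

lemma card_invol:
  assumes "\<forall>x\<in>R. f x \<in> R \<and> f (f x) = x" "D \<subseteq> R" "A \<subseteq> R"
  shows "card (D \<inter> f ` A) = card (f ` D \<inter> A)" and "card (f ` A) = card A"
proof -
  have inj: "inj_on f R" using assms(1) by (metis inj_onI)
  have "f ` (D \<inter> f ` A) = f ` D \<inter> A"
  proof
    show "f ` (D \<inter> f ` A) \<subseteq> f ` D \<inter> A" using assms by auto
    show "f ` D \<inter> A \<subseteq> f ` (D \<inter> f ` A)"
    proof
      fix y assume "y \<in> f ` D \<inter> A"
      then obtain x where "x \<in> D" "y = f x" "y \<in> A" by auto
      then have "x = f y" using assms by auto
      then show "y \<in> f ` (D \<inter> f ` A)" using \<open>x \<in> D\<close> \<open>y = f x\<close> \<open>y \<in> A\<close> by auto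
    qed
  qed
  moreover have "inj_on f (D \<inter> f ` A)" using inj assms(2) by (meson inf.coboundedI1 inj_on_subset)
  ultimately show "card (D \<inter> f ` A) = card (f ` D \<inter> A)" by (metis card_image)
  show "card (f ` A) = card A" using inj assms(3) by (meson card_image inj_on_subset)
qed

definition wt :: "nat \<Rightarrow> nat set \<Rightarrow> nat set \<Rightarrow> nat set \<Rightarrow> nat set \<Rightarrow> nat" where
  "wt j D E A B = (j - card A) + card (D \<inter> A) + card (E \<inter> B)"

definition Pset :: "nat \<Rightarrow> nat \<Rightarrow> (bool list \<Rightarrow> bool) \<Rightarrow> bool list set" where
  "Pset j k Q = {p. cnt True p = j \<and> cnt False p = k \<and> Q p}"

definition W :: "'a::comm_semiring_1 \<Rightarrow> nat \<Rightarrow> nat \<Rightarrow> (bool list \<Rightarrow> bool) \<Rightarrow> nat set \<Rightarrow> nat set \<Rightarrow> 'a" where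
  "W x j k Q D E = (\<Sum>p\<in>Pset j k Q. x ^ wt j D E (adjR True p) (adjR False p))"

abbreviation "Down \<equiv> (\<lambda>p. p \<noteq> [] \<and> hd p = False)"
abbreviation "Up \<equiv> (\<lambda>p. p \<noteq> [] \<and> last p = False)"

lemma Pset_Down: "Pset j k Down = {p. set p \<subseteq> {True, False} \<and> cnt True p = j \<and> cnt False p = k \<and> p \<noteq> [] \<and> hd p = False}"
  by (auto simp: Pset_def)

lemma Pset_Down': "Pset j k Down = {p. set p \<subseteq> {False, True} \<and> cnt False p = k \<and> cnt True p = j \<and> p \<noteq> [] \<and> hd p = False}"
  by (auto simp: Pset_def)

lemma W_trn_D:
  assumes "Suc (Suc i) < j"
  shows "W x j k Down (trn i ` D) E = W x j k Down D E"
proof -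
  have "W x j k Down D E = (\<Sum>p\<in>Pset j k Down. x ^ wt j (trn i ` D) E (trn i ` adjR True p) (adjR False p))"
    unfolding W_def wt_def
    by (simp add: card_image inj_trn image_Int[OF inj_trn, symmetric])
  also have "\<dots> = W x j k Down (trn i ` D) E"
    unfolding W_def Pset_Down
    using swap_sum[of True False "Suc i" j "\<lambda>A B. x ^ wt j (trn i ` D) E A B" k False] assms by simp
  finally show ?thesis by simp
qed

lemma W_trn_E:
  assumes "Suc (Suc i) < k"
  shows "W x j k Down D (trn i ` E) = W x j k Down D E"
proof -
  have "W x j k Down D E = (\<Sum>p\<in>Pset j k Down. x ^ wt j D (trn i ` E) (adjR True p) (trn i ` adjR False p))"
    unfolding W_def wt_def
    by (simp add: card_image inj_trn image_Int[OF inj_trn, symmetric])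
  also have "\<dots> = W x j k Down D (trn i ` E)"
    unfolding W_def Pset_Down'
    using swap_sum[of False True "Suc i" k "\<lambda>B A. x ^ wt j D (trn i ` E) A B" j False] assms by simp
  finally show ?thesis by simp
qed

lemma W_Down_card:
  assumes "D \<subseteq> {x. Suc x < j}" "D' \<subseteq> {x. Suc x < j}" "card D = card D'"
    and "E \<subseteq> {x. Suc x < k}" "E' \<subseteq> {x. Suc x < k}" "card E = card E'"
  shows "W x j k Down D E = W x j k Down D' E'"
proof -
  have "W x j k Down D E = W x j k Down D' E"
    using card_invariance[of j "\<lambda>D. W x j k Down D E", OF _ assms(1-3)] W_trn_D by blast
  also have "\<dots> = W x j k Down D' E'"
    using card_invariance[of k "\<lambda>E. W x j k Down D' E", OF _ assms(4-6)] W_trn_E by blast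
  finally show ?thesis .
qed

lemma W_Up_Down:
  assumes "D \<subseteq> {x. Suc x < j}" "E \<subseteq> {x. Suc x < k}"
  shows "W x j k Down ((\<lambda>i. j - 2 - i) ` D) ((\<lambda>i. k - 2 - i) ` E) = W x j k Up D E"
  unfolding W_def
proof (rule sum.reindex_bij_witness[where i = rev and j = rev])
  fix p assume p: "p \<in> Pset j k Down"
  have invj: "\<forall>x\<in>{x. Suc x < j}. j - 2 - x \<in> {x. Suc x < j} \<and> j - 2 - (j - 2 - x) = x" by auto
  have invk: "\<forall>x\<in>{x. Suc x < k}. k - 2 - x \<in> {x. Suc x < k} \<and> k - 2 - (k - 2 - x) = x" by auto
  have cj: "cnt True p = j" "cnt False p = k" using p by (auto simp: Pset_def)
  have bA: "adjR True p \<subseteq> {x. Suc x < j}" "adjR False p \<subseteq> {x. Suc x < k}"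
    using adjR_bound cj by metis+
  show "x ^ wt j D E (adjR True (rev p)) (adjR False (rev p)) =
        x ^ wt j ((\<lambda>i. j - 2 - i) ` D) ((\<lambda>i. k - 2 - i) ` E) (adjR True p) (adjR False p)"
    unfolding wt_def adjR_rev cj
    using card_invol[OF invj assms(1) bA(1)] card_invol[OF invk assms(2) bA(2)] by simp
qed (auto simp: Pset_def last_rev hd_rev)




lemma perms_length: "\<mu> \<in> perms n \<Longrightarrow> length \<mu> = n"
  unfolding perms_def by (metis (mono_tags) card_atLeastAtMost diff_Suc_1 distinct_card mem_Collect_eq)

definition idx :: "nat list \<Rightarrow> nat \<Rightarrow> nat" where
  "idx w v = (LEAST i. i < length w \<and> w ! i = v)"

lemma idx_nth: "distinct w \<Longrightarrow> i < length w \<Longrightarrow> idx w (w ! i) = i"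
  unfolding idx_def by (rule Least_equality) (auto simp: nth_eq_iff_index_eq)

lemma idx_in: "v \<in> set w \<Longrightarrow> idx w v < length w \<and> w ! idx w v = v"
  unfolding idx_def by (rule LeastI_ex) (auto simp: in_set_conv_nth)

lemma perm_inv_length[simp]: "length (perm_inv w) = length w"
  by (simp add: perm_inv_def del: upt_Suc)

lemma perm_inv_nth: "i < length w \<Longrightarrow> perm_inv w ! i = Suc (idx w (Suc i))"
  by (simp add: perm_inv_def idx_def del: upt_Suc)

lemma perm_inv_range: assumes "\<sigma> \<in> perms j" shows "\<forall>x\<in>set (perm_inv \<sigma>). 1 \<le> x \<and> x \<le> j"
proof
  fix x assume "x \<in> set (perm_inv \<sigma>)"
  then obtain i where i: "i < length \<sigma>" "x = perm_inv \<sigma> ! i" by (auto simp: in_set_conv_nth)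
  have l: "length \<sigma> = j" using perms_length[OF assms] .
  have "Suc i \<in> set \<sigma>" using assms i l by (auto simp: perms_def)
  then have "idx \<sigma> (Suc i) < j" using idx_in l by blast
  then show "1 \<le> x \<and> x \<le> j" using i perm_inv_nth by simp
qed

lemma perm_inv_at: assumes "\<sigma> \<in> perms j" "q < j"
  shows "perm_inv \<sigma> ! (\<sigma> ! q - 1) = Suc q"
proof -
  have l: "length \<sigma> = j" using perms_length[OF assms(1)] .
  have "\<sigma> ! q \<in> {1..j}" using assms l by (auto simp: perms_def)
  then have "\<sigma> ! q - 1 < length \<sigma>" "Suc (\<sigma> ! q - 1) = \<sigma> ! q" using l by auto
  then show ?thesis using perm_inv_nth idx_nth assms l by (simp add: perms_def)
qed

lemma perm_inv_inj: assumes "\<mu>1 \<in> perms n" "\<mu>2 \<in> perms n" "perm_inv \<mu>1 = perm_inv \<mu>2"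
  shows "\<mu>1 = \<mu>2"
proof (rule nth_equalityI)
  have l: "length \<mu>1 = n" "length \<mu>2 = n" using perms_length assms by auto
  then show "length \<mu>1 = length \<mu>2" by simp
  fix q assume q: "q < length \<mu>1"
  define v where "v = \<mu>1 ! q"
  have v: "v \<in> {1..n}" using q assms(1) by (auto simp: perms_def v_def)
  have i1: "idx \<mu>1 v = q" using idx_nth q assms(1) by (simp add: perms_def v_def)
  have vv: "v - 1 < n" "Suc (v - 1) = v" using v by auto
  have "perm_inv \<mu>1 ! (v - 1) = Suc q" using perm_inv_nth[of "v - 1" \<mu>1] vv l i1 by simp
  then have "Suc (idx \<mu>2 v) = Suc q" using perm_inv_nth[of "v - 1" \<mu>2] vv l assms(3) by simp
  moreover have "v \<in> set \<mu>2" using v assms(2) by (simp add: perms_def)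
  ultimately show "\<mu>1 ! q = \<mu>2 ! q" using idx_in[of v \<mu>2] v_def by simp
qed

lemma rank_lemma:
  assumes r: "red_eq s' \<sigma>" and s: "\<sigma> \<in> perms j" and q: "q < j"
  shows "card {a \<in> set s'. a < s' ! q} = \<sigma> ! q - 1"
proof -
  have l: "length \<sigma> = j" using perms_length[OF s] .
  have ls: "length s' = j" "distinct s'" using r l by (auto simp: red_eq_def)
  have ord: "\<And>a b. a < j \<Longrightarrow> b < j \<Longrightarrow> s' ! a < s' ! b \<longleftrightarrow> \<sigma> ! a < \<sigma> ! b"
    using r l by (auto simp: red_eq_def)
  have ds: "distinct \<sigma>" "set \<sigma> = {1..j}" using s by (auto simp: perms_def)
  have e1: "{a \<in> set s'. a < s' ! q} = (\<lambda>i. s' ! i) ` {i. i < j \<and> \<sigma> ! i < \<sigma> ! q}"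
    using ls ord q by (auto simp: in_set_conv_nth)
  have c1: "card {a \<in> set s'. a < s' ! q} = card {i. i < j \<and> \<sigma> ! i < \<sigma> ! q}"
    unfolding e1 by (rule card_image) (use ls in \<open>auto simp: inj_on_def nth_eq_iff_index_eq\<close>)
  have e2: "{y \<in> set \<sigma>. y < \<sigma> ! q} = (\<lambda>i. \<sigma> ! i) ` {i. i < j \<and> \<sigma> ! i < \<sigma> ! q}"
    using l by (auto simp: in_set_conv_nth)
  have c2: "card {y \<in> set \<sigma>. y < \<sigma> ! q} = card {i. i < j \<and> \<sigma> ! i < \<sigma> ! q}"
    unfolding e2 by (rule card_image) (use ds l in \<open>auto simp: inj_on_def nth_eq_iff_index_eq\<close>)
  have "\<sigma> ! q \<in> {1..j}" using ds l q nth_mem by blast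
  then have "{y \<in> set \<sigma>. y < \<sigma> ! q} = {1..<\<sigma> ! q}" using ds by auto
  then show ?thesis using c1 c2 by simp
qed

lemma count_shift:
  assumes "X \<subseteq> {2..}"
  shows "card {i'. i' < i \<and> Suc (Suc i') \<in> X} = card {a \<in> X. a < Suc (Suc i)}"
proof -
  have "{a \<in> X. a < Suc (Suc i)} = (\<lambda>i'. Suc (Suc i')) ` {i'. i' < i \<and> Suc (Suc i') \<in> X}"
  proof
    show "{a \<in> X. a < Suc (Suc i)} \<subseteq> (\<lambda>i'. Suc (Suc i')) ` {i'. i' < i \<and> Suc (Suc i') \<in> X}"
    proof
      fix a assume a: "a \<in> {a \<in> X. a < Suc (Suc i)}"
      then have "a \<ge> 2" using assms by auto
      then have "a = Suc (Suc (a - 2))" by simp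
      then show "a \<in> (\<lambda>i'. Suc (Suc i')) ` {i'. i' < i \<and> Suc (Suc i') \<in> X}" using a
        by (metis (mono_tags, lifting) Suc_less_SucD image_eqI mem_Collect_eq)
    qed
  qed auto
  then show ?thesis by (simp add: card_image inj_on_def)
qed

lemma cnt_take_card: "i \<le> length p \<Longrightarrow> cnt c (take i p) = card {i'. i' < i \<and> p ! i' = c}"
proof -
  assume i: "i \<le> length p"
  have "{ia. ia < length (take i p) \<and> take i p ! ia = c} = {i'. i' < i \<and> p ! i' = c}"
    using i by auto
  then show ?thesis unfolding cnt_def length_filter_conv_card by simp
qed

lemma cnt_length: "cnt True p + cnt False p = length p"
  by (induction p) auto




definition Allset :: "nat list \<Rightarrow> nat list \<Rightarrow> nat list set" where
  "Allset \<sigma> \<tau> = {\<mu> \<in> perms (length \<sigma> + length \<tau> + 1). \<exists>s' t'. \<mu> = s' @ [1] @ t' \<and> red_eq s' \<sigma> \<and> red_eq t' \<tau>}"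

definition Psi :: "nat \<Rightarrow> nat \<Rightarrow> nat list \<Rightarrow> bool list" where
  "Psi j k \<mu> = map (\<lambda>i. Suc (Suc i) \<in> set (take j \<mu>)) [0..<j + k]"

lemma Psi_length[simp]: "length (Psi j k \<mu>) = j + k"
  by (simp add: Psi_def)

lemma Psi_nth: "i < j + k \<Longrightarrow> Psi j k \<mu> ! i = (Suc (Suc i) \<in> set (take j \<mu>))"
  by (simp add: Psi_def)

context
  fixes \<sigma> \<tau> :: "nat list" and j k :: nat and \<mu> s' t' :: "nat list"
  assumes \<sigma>: "\<sigma> \<in> perms j" and \<tau>: "\<tau> \<in> perms k"
    and \<mu>: "\<mu> = s' @ [1] @ t'" "red_eq s' \<sigma>" "red_eq t' \<tau>" "\<mu> \<in> perms (j + k + 1)"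
begin

lemma st_len: "length s' = j" "length t' = k" "distinct s'" "distinct t'"
  using \<mu> perms_length[OF \<sigma>] perms_length[OF \<tau>] by (auto simp: red_eq_def)

lemma take_mu: "take j \<mu> = s'"
  using st_len \<mu>(1) by simp

lemma dist_mu: "distinct \<mu>" and set_mu: "set \<mu> = {1..j + k + 1}"
  using \<mu>(4) by (auto simp: perms_def)

lemma sets_st: "set s' \<subseteq> {2..j + k + 1}" "set t' \<subseteq> {2..j + k + 1}" "set s' \<inter> set t' = {}"
  "\<And>v. v \<in> {2..j + k + 1} \<Longrightarrow> v \<in> set s' \<or> v \<in> set t'"
  "card (set s') = j" "card (set t') = k"
proof -
  have d: "distinct (s' @ [1] @ t')" using dist_mu \<mu>(1) by simp
  have s: "set s' \<union> {1} \<union> set t' = {1..j + k + 1}" using set_mu \<mu>(1) by auto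
  have n1: "1 \<notin> set s'" "1 \<notin> set t'" using d by auto
  show "set s' \<subseteq> {2..j + k + 1}"
  proof
    fix x assume x: "x \<in> set s'"
    then have "x \<in> {1..j + k + 1}" "x \<noteq> 1" using s n1 by blast+
    then show "x \<in> {2..j + k + 1}" by simp
  qed
  show "set t' \<subseteq> {2..j + k + 1}"
  proof
    fix x assume x: "x \<in> set t'"
    then have "x \<in> {1..j + k + 1}" "x \<noteq> 1" using s n1 by blast+
    then show "x \<in> {2..j + k + 1}" by simp
  qed
  show "set s' \<inter> set t' = {}" using d by auto
  show "\<And>v. v \<in> {2..j + k + 1} \<Longrightarrow> v \<in> set s' \<or> v \<in> set t'"
  proof -
    fix v assume "v \<in> {2..j + k + 1}"
    then have "v \<in> set s' \<union> {1} \<union> set t'" "v \<noteq> 1" using s by auto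
    then show "v \<in> set s' \<or> v \<in> set t'" by blast
  qed
  show "card (set s') = j" "card (set t') = k" using st_len by (auto simp: distinct_card)
qed

lemma idx_mu_1: "idx \<mu> 1 = j"
  using idx_nth[OF dist_mu, of j] \<mu>(1) st_len perms_length[OF \<mu>(4)] by (simp add: nth_append)

lemma idx_mu_s: "q < j \<Longrightarrow> idx \<mu> (s' ! q) = q"
  using idx_nth[OF dist_mu, of q] \<mu>(1) st_len perms_length[OF \<mu>(4)] by (simp add: nth_append)

lemma idx_mu_t: "q < k \<Longrightarrow> idx \<mu> (t' ! q) = Suc j + q"
  using idx_nth[OF dist_mu, of "Suc j + q"] \<mu>(1) st_len perms_length[OF \<mu>(4)] by (simp add: nth_append)

lemma Psi_mem: "i < j + k \<Longrightarrow> Psi j k \<mu> ! i = (Suc (Suc i) \<in> set s')"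
  using Psi_nth take_mu by simp

lemma Psi_memF: "i < j + k \<Longrightarrow> (\<not> Psi j k \<mu> ! i) = (Suc (Suc i) \<in> set t')"
proof -
  assume i: "i < j + k"
  have "Suc (Suc i) \<in> {2..j + k + 1}" using i by simp
  then have "Suc (Suc i) \<in> set s' \<or> Suc (Suc i) \<in> set t'" by (rule sets_st(4))
  then show ?thesis using Psi_mem[OF i] sets_st(3) by blast
qed

lemma cntT_take: "i \<le> j + k \<Longrightarrow> cnt True (take i (Psi j k \<mu>)) = card {a \<in> set s'. a < Suc (Suc i)}"
proof -
  assume i: "i \<le> j + k"
  have "cnt True (take i (Psi j k \<mu>)) = card {i'. i' < i \<and> Psi j k \<mu> ! i' = True}"
    using cnt_take_card[of i "Psi j k \<mu>" True] i by simp
  also have "{i'. i' < i \<and> Psi j k \<mu> ! i' = True} = {i'. i' < i \<and> Suc (Suc i') \<in> set s'}"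
    using Psi_mem i by auto
  also have "card \<dots> = card {a \<in> set s'. a < Suc (Suc i)}"
  proof -
    have "set s' \<subseteq> {2..}" using sets_st(1) by auto
    then show ?thesis by (rule count_shift)
  qed
  finally show ?thesis .
qed

lemma cntF_take: "i \<le> j + k \<Longrightarrow> cnt False (take i (Psi j k \<mu>)) = card {a \<in> set t'. a < Suc (Suc i)}"
proof -
  assume i: "i \<le> j + k"
  have "cnt False (take i (Psi j k \<mu>)) = card {i'. i' < i \<and> Psi j k \<mu> ! i' = False}"
    using cnt_take_card[of i "Psi j k \<mu>" False] i by simp
  also have "{i'. i' < i \<and> Psi j k \<mu> ! i' = False} = {i'. i' < i \<and> Suc (Suc i') \<in> set t'}"
  proof (rule Collect_cong)
    fix x show "(x < i \<and> Psi j k \<mu> ! x = False) = (x < i \<and> Suc (Suc x) \<in> set t')"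
      using Psi_memF[of x] i by (cases "x < i") auto
  qed
  also have "card \<dots> = card {a \<in> set t'. a < Suc (Suc i)}"
  proof -
    have "set t' \<subseteq> {2..}" using sets_st(2) by auto
    then show ?thesis by (rule count_shift)
  qed
  finally show ?thesis .
qed

lemma cnt_Psi: "cnt True (Psi j k \<mu>) = j" "cnt False (Psi j k \<mu>) = k"
proof -
  have "{a \<in> set s'. a < Suc (Suc (j + k))} = set s'" using sets_st(1) by auto
  then show "cnt True (Psi j k \<mu>) = j" using cntT_take[of "j + k"] sets_st(5) by simp
  have "{a \<in> set t'. a < Suc (Suc (j + k))} = set t'" using sets_st(2) by auto
  then show "cnt False (Psi j k \<mu>) = k" using cntF_take[of "j + k"] sets_st(6) by simp
qed

lemma perm_inv_mu:
  "perm_inv \<mu> = Suc j # Mg (Psi j k \<mu>) (perm_inv \<sigma>) (map ((+) (Suc j)) (perm_inv \<tau>))"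
proof (rule nth_equalityI)
  have ln: "length \<mu> = j + k + 1" using perms_length[OF \<mu>(4)] .
  have lsig: "length \<sigma> = j" "length \<tau> = k" using perms_length \<sigma> \<tau> by auto
  show "length (perm_inv \<mu>) = length (Suc j # Mg (Psi j k \<mu>) (perm_inv \<sigma>) (map ((+) (Suc j)) (perm_inv \<tau>)))"
    using ln by simp
  fix x assume x: "x < length (perm_inv \<mu>)"
  show "perm_inv \<mu> ! x = (Suc j # Mg (Psi j k \<mu>) (perm_inv \<sigma>) (map ((+) (Suc j)) (perm_inv \<tau>))) ! x"
  proof (cases x)
    case 0
    then show ?thesis using perm_inv_nth[of 0 \<mu>] ln idx_mu_1 by simp
  next
    case (Suc i)
    have i: "i < j + k" using x Suc ln by simp
    have pv: "perm_inv \<mu> ! x = Suc (idx \<mu> (Suc (Suc i)))" using perm_inv_nth[of x \<mu>] x Suc by simp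
    have mg: "Mg (Psi j k \<mu>) (perm_inv \<sigma>) (map ((+) (Suc j)) (perm_inv \<tau>)) ! i =
      (if Psi j k \<mu> ! i then perm_inv \<sigma> ! cnt True (take i (Psi j k \<mu>))
       else map ((+) (Suc j)) (perm_inv \<tau>) ! cnt False (take i (Psi j k \<mu>)))"
      using nth_Mg[of "perm_inv \<sigma>" "Psi j k \<mu>" "map ((+) (Suc j)) (perm_inv \<tau>)" i] lsig cnt_Psi i by simp
    show ?thesis
    proof (cases "Psi j k \<mu> ! i")
      case True
      then have "Suc (Suc i) \<in> set s'" using Psi_mem i by simp
      then obtain q where q: "q < j" "s' ! q = Suc (Suc i)" using st_len by (auto simp: in_set_conv_nth)
      have c: "cnt True (take i (Psi j k \<mu>)) = \<sigma> ! q - 1"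
        using cntT_take[of i] i rank_lemma[OF \<mu>(2) \<sigma> q(1)] q by simp
      show ?thesis using True mg c perm_inv_at[OF \<sigma> q(1)] pv idx_mu_s[OF q(1)] q Suc by simp
    next
      case False
      then have "Suc (Suc i) \<in> set t'" using Psi_memF i by simp
      then obtain q where q: "q < k" "t' ! q = Suc (Suc i)" using st_len by (auto simp: in_set_conv_nth)
      have c: "cnt False (take i (Psi j k \<mu>)) = \<tau> ! q - 1"
        using cntF_take[of i] i rank_lemma[OF \<mu>(3) \<tau> q(1)] q by simp
      have l2: "\<tau> ! q - 1 < length (perm_inv \<tau>)"
      proof -
        have "\<tau> ! q \<in> set \<tau>" using q lsig by simp
        then have "\<tau> ! q \<in> {1..k}" using \<tau> by (simp add: perms_def)
        then show ?thesis using lsig by auto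
      qed
      show ?thesis using False mg c perm_inv_at[OF \<tau> q(1)] pv idx_mu_t[OF q(1)] q Suc l2 by simp
    qed
  qed
qed

lemma ides_mu:
  "ides \<mu> = wt j (desset (perm_inv \<sigma>)) (desset (perm_inv \<tau>)) (adjR True (Psi j k \<mu>)) (adjR False (Psi j k \<mu>))"
proof -
  let ?p = "Psi j k \<mu>"
  let ?u = "perm_inv \<sigma>"
  let ?w = "map ((+) (Suc j)) (perm_inv \<tau>)"
  have lsig: "length \<sigma> = j" "length \<tau> = k" using perms_length \<sigma> \<tau> by auto
  have lu: "length ?u = cnt True ?p" "length ?w = cnt False ?p" using lsig cnt_Psi by auto
  have ru: "\<forall>x\<in>set ?u. 1 \<le> x \<and> x \<le> j" using perm_inv_range[OF \<sigma>] .
  have ord: "\<forall>x\<in>set ?u. \<forall>y\<in>set ?w. x < y" using ru by auto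
  have hdc: "(Mg ?p ?u ?w \<noteq> [] \<and> hd (Mg ?p ?u ?w) < Suc j) = (?p \<noteq> [] \<and> hd ?p)"
  proof (cases "?p = []")
    case False
    show ?thesis
    proof (cases "hd ?p")
      case True
      have "cnt True ?p \<noteq> 0" using False True by (cases ?p) auto
      then have "length ?u \<noteq> 0" using lu by simp
      then have "?u \<noteq> []" by (metis length_0_conv)
      then have "hd ?u \<le> j" using ru by auto
      then show ?thesis using hd_Mg[OF lu False] True False by simp
    next
      case F: False
      have "cnt False ?p \<noteq> 0" using False F by (cases ?p) auto
      then have "length ?w \<noteq> 0" using lu by simp
      then have "?w \<noteq> []" by (metis length_0_conv)
      then have "hd ?w \<ge> Suc j" by (cases "perm_inv \<tau>") auto
      then show ?thesis using hd_Mg[OF lu False] F False by simp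
    qed
  qed simp
  have "ides \<mu> = card (desset (Suc j # Mg ?p ?u ?w))"
    unfolding ides_def des_desset perm_inv_mu ..
  also have "\<dots> = (if ?p \<noteq> [] \<and> hd ?p then 1 else 0) + card (desset (Mg ?p ?u ?w))"
    unfolding desset_Cons hdc by (simp add: card_0_Suc)
  also have "\<dots> = (if ?p \<noteq> [] \<and> hd ?p then 1 else 0) + ftR ?p + card (desset ?u \<inter> adjR True ?p)
      + card (desset (perm_inv \<tau>) \<inter> adjR False ?p)"
    using des_Mg[OF lu ord] desset_map_plus by simp
  also have "\<dots> = wt j (desset ?u) (desset (perm_inv \<tau>)) (adjR True ?p) (adjR False ?p)"
    using runs_lemma[of ?p] cnt_Psi unfolding wt_def by simp
  finally show ?thesis .
qed

lemma up_iff: "(j + k + 1 \<in> set t') = (Psi j k \<mu> \<noteq> [] \<and> last (Psi j k \<mu>) = False)"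
proof (cases "j + k = 0")
  case True
  then show ?thesis using st_len by (simp add: Psi_def)
next
  case False
  have ne: "Psi j k \<mu> \<noteq> []" using False by (simp add: Psi_def)
  have "last (Psi j k \<mu>) = Psi j k \<mu> ! (j + k - 1)" using ne by (simp add: last_conv_nth)
  then have "(\<not> last (Psi j k \<mu>)) = (Suc (Suc (j + k - 1)) \<in> set t')" using Psi_memF[of "j + k - 1"] False by simp
  moreover have "Suc (Suc (j + k - 1)) = j + k + 1" using False by simp
  ultimately show ?thesis using ne by simp
qed

lemma down_iff: "(2 \<in> set t') = (Psi j k \<mu> \<noteq> [] \<and> hd (Psi j k \<mu>) = False)"
proof (cases "j + k = 0")
  case True
  then show ?thesis using st_len by (simp add: Psi_def)
next
  case False
  have ne: "Psi j k \<mu> \<noteq> []" using False by (simp add: Psi_def)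
  have "hd (Psi j k \<mu>) = Psi j k \<mu> ! 0" using ne by (simp add: hd_conv_nth)
  then have "(\<not> hd (Psi j k \<mu>)) = (Suc (Suc 0) \<in> set t')" using Psi_memF[of 0] False by simp
  then show ?thesis using ne by (simp add: numeral_2_eq_2)
qed

end




lemma strict_sorted_nth_iff:
  assumes "sorted_wrt (<) l" "a < length l" "b < length l"
  shows "(l ! a < (l ! b :: nat)) = (a < b)"
proof (cases "a < b")
  case True then show ?thesis using sorted_wrt_nth_less[OF assms(1) True assms(3)] by simp
next
  case False
  show ?thesis
  proof (cases "a = b")
    case True then show ?thesis by simp
  next
    case F: False
    then have "b < a" using False by simp
    then have "l ! b < l ! a" using sorted_wrt_nth_less[OF assms(1) _ assms(2)] by simp
    then show ?thesis using False by simp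
  qed
qed

lemma iso_copy:
  assumes s: "\<sigma> \<in> perms m" and X: "finite X" "card X = m"
  shows "\<exists>s'. red_eq s' \<sigma> \<and> set s' = X"
proof -
  obtain l where l: "sorted_wrt (<) l" "set l = X" "length l = card X"
    using finite_set_strict_sorted[OF X(1)] by blast
  have ls: "length \<sigma> = m" using perms_length[OF s] .
  have ds: "distinct \<sigma>" "set \<sigma> = {1..m}" using s by (auto simp: perms_def)
  have rng: "\<And>a. a < m \<Longrightarrow> 1 \<le> \<sigma> ! a \<and> \<sigma> ! a \<le> m"
  proof -
    fix a assume "a < m"
    then have "\<sigma> ! a \<in> set \<sigma>" using ls by simp
    then show "1 \<le> \<sigma> ! a \<and> \<sigma> ! a \<le> m" using ds by auto
  qed
  define s' where "s' = map (\<lambda>x. l ! (x - 1)) \<sigma>"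
  have len: "length s' = length \<sigma>" by (simp add: s'_def)
  have ord: "\<And>a b. a < m \<Longrightarrow> b < m \<Longrightarrow> (s' ! a < s' ! b) = (\<sigma> ! a < \<sigma> ! b)"
  proof -
    fix a b assume ab: "a < m" "b < m"
    have "(s' ! a < s' ! b) = (l ! (\<sigma> ! a - 1) < l ! (\<sigma> ! b - 1))" using ab ls by (simp add: s'_def)
    also have "\<dots> = (\<sigma> ! a - 1 < \<sigma> ! b - 1)"
    proof -
      have "\<sigma> ! a - 1 < length l" "\<sigma> ! b - 1 < length l"
        using rng[OF ab(1)] rng[OF ab(2)] l(3) X(2) by auto
      then show ?thesis by (rule strict_sorted_nth_iff[OF l(1)])
    qed
    also have "\<dots> = (\<sigma> ! a < \<sigma> ! b)" using rng[OF ab(1)] rng[OF ab(2)] by auto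
    finally show "(s' ! a < s' ! b) = (\<sigma> ! a < \<sigma> ! b)" .
  qed
  have dist: "distinct s'"
  proof (subst distinct_conv_nth, intro allI impI)
    fix a b assume ab: "a < length s'" "b < length s'" "a \<noteq> b"
    then have "\<sigma> ! a \<noteq> \<sigma> ! b" using ds(1) len by (simp add: nth_eq_iff_index_eq)
    then have "\<sigma> ! a < \<sigma> ! b \<or> \<sigma> ! b < \<sigma> ! a" by auto
    then show "s' ! a \<noteq> s' ! b" using ord ab len ls by (metis less_irrefl)
  qed
  have "set s' = (\<lambda>x. l ! (x - 1)) ` {1..m}" using ds by (simp add: s'_def)
  also have "\<dots> = set l"
  proof
    show "(\<lambda>x. l ! (x - 1)) ` {1..m} \<subseteq> set l" using l(3) X(2) by auto
    show "set l \<subseteq> (\<lambda>x. l ! (x - 1)) ` {1..m}"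
    proof
      fix y assume "y \<in> set l"
      then obtain i where i: "i < length l" "y = l ! i" by (auto simp: in_set_conv_nth)
      then have "Suc i \<in> {1..m}" using l(3) X(2) by auto
      then show "y \<in> (\<lambda>x. l ! (x - 1)) ` {1..m}" using i by force
    qed
  qed
  finally have "set s' = X" using l(2) by simp
  moreover have "red_eq s' \<sigma>" unfolding red_eq_def using dist len ord ls by simp
  ultimately show ?thesis by blast
qed

lemma construct:
  assumes \<sigma>: "\<sigma> \<in> perms j" and \<tau>: "\<tau> \<in> perms k" and p: "cnt True p = j" "cnt False p = k"
  shows "\<exists>s' t'. red_eq s' \<sigma> \<and> red_eq t' \<tau> \<and> s' @ [1] @ t' \<in> perms (j + k + 1) \<and>
     Psi j k (s' @ [1] @ t') = p"
proof -
  have lp: "length p = j + k" using cnt_length[of p] p by simp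
  define A where "A = (\<lambda>i. Suc (Suc i)) ` {i. i < j + k \<and> p ! i}"
  define B where "B = (\<lambda>i. Suc (Suc i)) ` {i. i < j + k \<and> \<not> p ! i}"
  have cA: "card A = j"
  proof -
    have "card A = card {i. i < j + k \<and> p ! i}" unfolding A_def by (simp add: card_image inj_on_def)
    also have "\<dots> = cnt True p" using cnt_take_card[of "length p" p True] lp by simp
    finally show ?thesis using p by simp
  qed
  have cB: "card B = k"
  proof -
    have "card B = card {i. i < j + k \<and> \<not> p ! i}" unfolding B_def by (simp add: card_image inj_on_def)
    also have "\<dots> = cnt False p" using cnt_take_card[of "length p" p False] lp by simp
    finally show ?thesis using p by simp
  qed
  have fA: "finite A" "finite B" unfolding A_def B_def by auto
  obtain s' where s': "red_eq s' \<sigma>" "set s' = A" using iso_copy[OF \<sigma> fA(1) cA] by blast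
  obtain t' where t': "red_eq t' \<tau>" "set t' = B" using iso_copy[OF \<tau> fA(2) cB] by blast
  have lst: "length s' = j" "distinct s'" "length t' = k" "distinct t'"
    using s' t' perms_length[OF \<sigma>] perms_length[OF \<tau>] by (auto simp: red_eq_def)
  have AB: "A \<inter> B = {}" "1 \<notin> A" "1 \<notin> B" unfolding A_def B_def by auto
  have ABu: "A \<union> {1} \<union> B = {1..j + k + 1}"
  proof
    show "A \<union> {1} \<union> B \<subseteq> {1..j + k + 1}" unfolding A_def B_def by auto
    show "{1..j + k + 1} \<subseteq> A \<union> {1} \<union> B"
    proof
      fix v assume v: "v \<in> {1..j + k + 1}"
      show "v \<in> A \<union> {1} \<union> B"
      proof (cases "v = 1")
        case False
        then have "v = Suc (Suc (v - 2))" "v - 2 < j + k" using v by auto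
        then show ?thesis unfolding A_def B_def by (cases "p ! (v - 2)") blast+
      qed simp
    qed
  qed
  have perm: "s' @ [1] @ t' \<in> perms (j + k + 1)"
    unfolding perms_def using lst AB ABu s'(2) t'(2) by auto
  have psi: "Psi j k (s' @ [1] @ t') = p"
  proof (rule nth_equalityI)
    show "length (Psi j k (s' @ [1] @ t')) = length p" using lp by simp
    fix i assume "i < length (Psi j k (s' @ [1] @ t'))"
    then have i: "i < j + k" by simp
    have "Psi j k (s' @ [1] @ t') ! i = (Suc (Suc i) \<in> A)"
      using Psi_nth[OF i] lst s'(2) by simp
    also have "\<dots> = p ! i" unfolding A_def using i by auto
    finally show "Psi j k (s' @ [1] @ t') ! i = p ! i" .
  qed
  show ?thesis using s' t' perm psi by blast
qed




lemma tri_bij: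
  assumes \<sigma>: "\<sigma> \<in> perms j" and \<tau>: "\<tau> \<in> perms k"
    and cond: "\<And>\<mu> s' t'. \<mu> = s' @ [1] @ t' \<Longrightarrow> red_eq s' \<sigma> \<Longrightarrow> red_eq t' \<tau> \<Longrightarrow> \<mu> \<in> perms (j + k + 1)
       \<Longrightarrow> R t' = Q (Psi j k \<mu>)"
  shows "bij_betw (Psi j k) {\<mu> \<in> perms (j + k + 1). \<exists>s' t'. \<mu> = s' @ [1] @ t' \<and> red_eq s' \<sigma> \<and> red_eq t' \<tau> \<and> R t'}
     (Pset j k Q)"
  unfolding bij_betw_def
proof
  show "inj_on (Psi j k) {\<mu> \<in> perms (j + k + 1). \<exists>s' t'. \<mu> = s' @ [1] @ t' \<and> red_eq s' \<sigma> \<and> red_eq t' \<tau> \<and> R t'}"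
  proof (rule inj_onI)
    fix \<mu>1 \<mu>2 assume m1: "\<mu>1 \<in> {\<mu> \<in> perms (j + k + 1). \<exists>s' t'. \<mu> = s' @ [1] @ t' \<and> red_eq s' \<sigma> \<and> red_eq t' \<tau> \<and> R t'}"
      and m2: "\<mu>2 \<in> {\<mu> \<in> perms (j + k + 1). \<exists>s' t'. \<mu> = s' @ [1] @ t' \<and> red_eq s' \<sigma> \<and> red_eq t' \<tau> \<and> R t'}"
      and e: "Psi j k \<mu>1 = Psi j k \<mu>2"
    from m1 obtain s1 t1 where 1: "\<mu>1 \<in> perms (j + k + 1)" "\<mu>1 = s1 @ [1] @ t1" "red_eq s1 \<sigma>" "red_eq t1 \<tau>" by blast
    from m2 obtain s2 t2 where 2: "\<mu>2 \<in> perms (j + k + 1)" "\<mu>2 = s2 @ [1] @ t2" "red_eq s2 \<sigma>" "red_eq t2 \<tau>" by blast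
    have "perm_inv \<mu>1 = perm_inv \<mu>2"
      using perm_inv_mu[OF \<sigma> \<tau> 1(2-4) 1(1)] perm_inv_mu[OF \<sigma> \<tau> 2(2-4) 2(1)] e by simp
    then show "\<mu>1 = \<mu>2" using perm_inv_inj 1(1) 2(1) by blast
  qed
  show "Psi j k ` {\<mu> \<in> perms (j + k + 1). \<exists>s' t'. \<mu> = s' @ [1] @ t' \<and> red_eq s' \<sigma> \<and> red_eq t' \<tau> \<and> R t'} = Pset j k Q"
  proof
    show "Psi j k ` {\<mu> \<in> perms (j + k + 1). \<exists>s' t'. \<mu> = s' @ [1] @ t' \<and> red_eq s' \<sigma> \<and> red_eq t' \<tau> \<and> R t'} \<subseteq> Pset j k Q"
    proof
      fix p assume "p \<in> Psi j k ` {\<mu> \<in> perms (j + k + 1). \<exists>s' t'. \<mu> = s' @ [1] @ t' \<and> red_eq s' \<sigma> \<and> red_eq t' \<tau> \<and> R t'}"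
      then obtain \<mu> s' t' where m: "p = Psi j k \<mu>" "\<mu> \<in> perms (j + k + 1)" "\<mu> = s' @ [1] @ t'" "red_eq s' \<sigma>" "red_eq t' \<tau>" "R t'"
        by blast
      show "p \<in> Pset j k Q"
        unfolding Pset_def using cnt_Psi[OF \<sigma> \<tau> m(3-5) m(2)] cond[OF m(3-5) m(2)] m(1) m(6) by simp
    qed
    show "Pset j k Q \<subseteq> Psi j k ` {\<mu> \<in> perms (j + k + 1). \<exists>s' t'. \<mu> = s' @ [1] @ t' \<and> red_eq s' \<sigma> \<and> red_eq t' \<tau> \<and> R t'}"
    proof
      fix p assume p: "p \<in> Pset j k Q"
      then have pc: "cnt True p = j" "cnt False p = k" "Q p" by (auto simp: Pset_def)
      obtain s' t' where st: "red_eq s' \<sigma>" "red_eq t' \<tau>" "s' @ [1] @ t' \<in> perms (j + k + 1)"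
        "Psi j k (s' @ [1] @ t') = p"
        using construct[OF \<sigma> \<tau> pc(1,2)] by blast
      have "R t'" using cond[OF refl st(1,2,3)] st(4) pc(3) by simp
      then show "p \<in> Psi j k ` {\<mu> \<in> perms (j + k + 1). \<exists>s' t'. \<mu> = s' @ [1] @ t' \<and> red_eq s' \<sigma> \<and> red_eq t' \<tau> \<and> R t'}"
        using st by (metis (mono_tags, lifting) image_eqI mem_Collect_eq)
    qed
  qed
qed

lemma tri_sum:
  fixes x :: "'a::comm_semiring_1"
  assumes \<sigma>: "\<sigma> \<in> perms j" and \<tau>: "\<tau> \<in> perms k"
    and cond: "\<And>\<mu> s' t'. \<mu> = s' @ [1] @ t' \<Longrightarrow> red_eq s' \<sigma> \<Longrightarrow> red_eq t' \<tau> \<Longrightarrow> \<mu> \<in> perms (j + k + 1)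
       \<Longrightarrow> R t' = Q (Psi j k \<mu>)"
  shows "(\<Sum>\<mu>\<in>{\<mu> \<in> perms (j + k + 1). \<exists>s' t'. \<mu> = s' @ [1] @ t' \<and> red_eq s' \<sigma> \<and> red_eq t' \<tau> \<and> R t'}. x ^ ides \<mu>)
    = W x j k Q (desset (perm_inv \<sigma>)) (desset (perm_inv \<tau>))"
proof -
  let ?S = "{\<mu> \<in> perms (j + k + 1). \<exists>s' t'. \<mu> = s' @ [1] @ t' \<and> red_eq s' \<sigma> \<and> red_eq t' \<tau> \<and> R t'}"
  have "(\<Sum>\<mu>\<in>?S. x ^ ides \<mu>) = (\<Sum>\<mu>\<in>?S. (\<lambda>p. x ^ wt j (desset (perm_inv \<sigma>)) (desset (perm_inv \<tau>)) (adjR True p) (adjR False p)) (Psi j k \<mu>))"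
  proof (rule sum.cong)
    fix \<mu> assume "\<mu> \<in> ?S"
    then obtain s' t' where m: "\<mu> \<in> perms (j + k + 1)" "\<mu> = s' @ [1] @ t'" "red_eq s' \<sigma>" "red_eq t' \<tau>" by blast
    show "x ^ ides \<mu> = (\<lambda>p. x ^ wt j (desset (perm_inv \<sigma>)) (desset (perm_inv \<tau>)) (adjR True p) (adjR False p)) (Psi j k \<mu>)"
      using ides_mu[OF \<sigma> \<tau> m(2-4) m(1)] by simp
  qed simp
  also have "\<dots> = W x j k Q (desset (perm_inv \<sigma>)) (desset (perm_inv \<tau>))"
    unfolding W_def by (rule sum.reindex_bij_betw[OF tri_bij[where R = R and Q = Q, OF \<sigma> \<tau> cond]])
  finally show ?thesis .
qed

lemma desset_sub: "\<sigma> \<in> perms j \<Longrightarrow> desset (perm_inv \<sigma>) \<subseteq> {x. Suc x < j}"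
  using perms_length[of \<sigma> j] by (auto simp: desset_def)

theorem corollary3p1:
  fixes \<sigma> \<sigma>h \<tau> \<tau>h :: "nat list" and j k :: nat
  assumes "\<sigma> \<in> perms j" and "\<sigma>h \<in> perms j" and "ides \<sigma> = ides \<sigma>h"
    and "\<tau> \<in> perms k" and "\<tau>h \<in> perms k" and "ides \<tau> = ides \<tau>h"
  shows "(\<Sum>\<mu>\<in>tri_up \<sigma> \<tau>. [:0, 1:] ^ ides \<mu>) =
         (\<Sum>\<mu>\<in>tri_down \<sigma>h \<tau>h. [:0, 1:] ^ ides \<mu> :: int poly)"
proof -
  let ?x = "[:0, 1:] :: int poly"
  have l: "length \<sigma> = j" "length \<tau> = k" "length \<sigma>h = j" "length \<tau>h = k"
    using assms perms_length by auto
  have up: "tri_up \<sigma> \<tau> = {\<mu> \<in> perms (j + k + 1). \<exists>s' t'. \<mu> = s' @ [1] @ t' \<and> red_eq s' \<sigma> \<and> red_eq t' \<tau> \<and> j + k + 1 \<in> set t'}"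
    unfolding tri_up_def l ..
  have down: "tri_down \<sigma>h \<tau>h = {\<mu> \<in> perms (j + k + 1). \<exists>s' t'. \<mu> = s' @ [1] @ t' \<and> red_eq s' \<sigma>h \<and> red_eq t' \<tau>h \<and> 2 \<in> set t'}"
    unfolding tri_down_def l ..
  define D where "D = desset (perm_inv \<sigma>)"
  define E where "E = desset (perm_inv \<tau>)"
  define Dh where "Dh = desset (perm_inv \<sigma>h)"
  define Eh where "Eh = desset (perm_inv \<tau>h)"
  have sub: "D \<subseteq> {x. Suc x < j}" "E \<subseteq> {x. Suc x < k}" "Dh \<subseteq> {x. Suc x < j}" "Eh \<subseteq> {x. Suc x < k}"
    unfolding D_def E_def Dh_def Eh_def using desset_sub assms by auto
  have cards: "card D = card Dh" "card E = card Eh"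
    using assms(3,6) unfolding D_def E_def Dh_def Eh_def ides_def des_desset by auto
  have invj: "\<forall>x\<in>{x. Suc x < j}. j - 2 - x \<in> {x. Suc x < j} \<and> j - 2 - (j - 2 - x) = x" by auto
  have invk: "\<forall>x\<in>{x. Suc x < k}. k - 2 - x \<in> {x. Suc x < k} \<and> k - 2 - (k - 2 - x) = x" by auto
  have rsub: "(\<lambda>i. j - 2 - i) ` D \<subseteq> {x. Suc x < j}" "(\<lambda>i. k - 2 - i) ` E \<subseteq> {x. Suc x < k}"
    using sub invj invk by auto
  have rcard: "card ((\<lambda>i. j - 2 - i) ` D) = card D" "card ((\<lambda>i. k - 2 - i) ` E) = card E"
    using card_invol(2)[OF invj sub(1) sub(1)] card_invol(2)[OF invk sub(2) sub(2)] by auto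
  have "(\<Sum>\<mu>\<in>tri_up \<sigma> \<tau>. ?x ^ ides \<mu>) = W ?x j k Up D E"
    unfolding up D_def E_def
    by (rule tri_sum[OF assms(1) assms(4)]) (rule up_iff[OF assms(1) assms(4)])
  also have "\<dots> = W ?x j k Down ((\<lambda>i. j - 2 - i) ` D) ((\<lambda>i. k - 2 - i) ` E)"
    by (rule W_Up_Down[OF sub(1) sub(2), symmetric])
  also have "\<dots> = W ?x j k Down Dh Eh"
    by (rule W_Down_card[OF rsub(1) sub(3) _ rsub(2) sub(4)]) (use rcard cards in auto)
  also have "\<dots> = (\<Sum>\<mu>\<in>tri_down \<sigma>h \<tau>h. ?x ^ ides \<mu>)"
    unfolding down Dh_def Eh_def
    by (rule tri_sum[OF assms(2) assms(5), symmetric]) (rule down_iff[OF assms(2) assms(5)])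
  finally show ?thesis .
qed


end
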